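(* Let $\Sigma$ be a finite alphabet and let $L_1, L_2 \subseteq \Sigma^*$ be regular languages. Then $L_1 \leftarrow L_2$ is regular.
   Context: For strings $x, y \in \Sigma^*$, the outfix-guided insertion of $y$ into $x$ is $x \leftarrow y = \{ x_1 u z v x_2 \mid x = x_1 u v x_2,\ y = u z v,\ u \neq \varepsilon,\ v \neq \varepsilon \}$. For languages, $L_1 \leftarrow L_2 = \bigcup_{x \in L_1, y \in L_2} x \leftarrow y$. *)

theory Defs
  imports Main
begin

datatype 'a rexp = Zero | One | Atom 'a | Plus "'a rexp" "'a rexp"
                 | Times "'a rexp" "'a rexp" | Star "'a rexp"

definition conc :: "'a list set \<Rightarrow> 'a list set \<Rightarrow> 'a list set" where
  "conc A B = {xs @ ys | xs ys. xs \<in> A \<and> ys \<in> B}"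

inductive_set star :: "'a list set \<Rightarrow> 'a list set" for A :: "'a list set" where
  star_Nil: "[] \<in> star A"
| star_app: "\<lbrakk> xs \<in> A; ys \<in> star A \<rbrakk> \<Longrightarrow> xs @ ys \<in> star A"

fun lang :: "'a rexp \<Rightarrow> 'a list set" where
  "lang Zero = {}"
| "lang One = {[]}"
| "lang (Atom a) = {[a]}"
| "lang (Plus r s) = lang r \<union> lang s"
| "lang (Times r s) = conc (lang r) (lang s)"
| "lang (Star r) = star (lang r)"

definition regular :: "'a list set \<Rightarrow> bool" where
  "regular L \<longleftrightarrow> (\<exists>r. lang r = L)"

definition ogi :: "'a list \<Rightarrow> 'a list \<Rightarrow> 'a list set" where
  "ogi x y = {x1 @ u @ z @ v @ x2 | x1 u z v x2.
               x = x1 @ u @ v @ x2 \<and> y = u @ z @ v \<and> u \<noteq> [] \<and> v \<noteq> []}"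

definition ogi_lang :: "'a list set \<Rightarrow> 'a list set \<Rightarrow> 'a list set" where
  "ogi_lang L1 L2 = (\<Union>x\<in>L1. \<Union>y\<in>L2. ogi x y)"

end

theory Submission
  imports Defs
begin

definition dq :: "'a list \<Rightarrow> 'a list set \<Rightarrow> 'a list set" where
  "dq w L = {v. w @ v \<in> L}"

definition fq :: "'a list set \<Rightarrow> bool" where
  "fq L = finite (range (\<lambda>w. dq w L))"

lemma mem_dq[simp]: "x \<in> dq w L \<longleftrightarrow> w @ x \<in> L"
  by (simp add: dq_def)

lemma dq_Nil[simp]: "dq [] L = L"
  by (simp add: dq_def)

lemma dq_app[simp]: "dq (u @ v) L = dq v (dq u L)"
  by (simp add: dq_def)

lemma regular_empty: "regular {}"
  unfolding regular_def by (rule exI[of _ Zero]) simp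

lemma regular_eps: "regular {[]}"
  unfolding regular_def by (rule exI[of _ One]) simp

lemma regular_atom: "regular {[a]}"
  unfolding regular_def by (rule exI[of _ "Atom a"]) simp

lemma regular_Un: "regular A \<Longrightarrow> regular B \<Longrightarrow> regular (A \<union> B)"
  unfolding regular_def by (metis lang.simps(4))

lemma regular_conc: "regular A \<Longrightarrow> regular B \<Longrightarrow> regular (conc A B)"
  unfolding regular_def by (metis lang.simps(5))

lemma regular_star: "regular A \<Longrightarrow> regular (star A)"
  unfolding regular_def by (metis lang.simps(6))

lemma regular_UN: "finite I \<Longrightarrow> (\<forall>i\<in>I. regular (f i)) \<Longrightarrow> regular (\<Union>i\<in>I. f i)"
  by (induction I rule: finite_induct) (auto intro: regular_empty regular_Un)

lemma star_append: "xs \<in> star A \<Longrightarrow> ys \<in> star A \<Longrightarrow> xs @ ys \<in> star A"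
  by (induction rule: star.induct) (auto intro: star.intros)

definition LL :: "'a list set \<Rightarrow> 'a list set \<Rightarrow> 'a list set set \<Rightarrow> 'a list set" where
  "LL p q S = {w. dq w p = q \<and> (\<forall>k. 0 < k \<and> k < length w \<longrightarrow> dq (take k w) p \<in> S)}"

lemma LL_empty:
  "LL p q {} = (if p = q then {[]} else {}) \<union> (\<Union>a\<in>{a. dq [a] p = q}. {[a]})"
proof (rule set_eqI)
  fix w
  show "w \<in> LL p q {} \<longleftrightarrow> w \<in> (if p = q then {[]} else {}) \<union> (\<Union>a\<in>{a. dq [a] p = q}. {[a]})"
  proof
    assume h: "w \<in> LL p q {}"
    have "length w \<le> 1"
    proof (rule ccontr)
      assume "\<not> length w \<le> 1"
      with h show False unfolding LL_def by (metis (mono_tags, lifting) empty_iff less_one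
            mem_Collect_eq not_le zero_less_one)
    qed
    then have "w = [] \<or> (\<exists>a. w = [a])"
      by (cases w) auto
    with h show "w \<in> (if p = q then {[]} else {}) \<union> (\<Union>a\<in>{a. dq [a] p = q}. {[a]})"
      unfolding LL_def by auto
  next
    assume "w \<in> (if p = q then {[]} else {}) \<union> (\<Union>a\<in>{a. dq [a] p = q}. {[a]})"
    then show "w \<in> LL p q {}"
      unfolding LL_def by (auto split: if_splits)
  qed
qed

lemma regular_LL_empty:
  fixes p q :: "('a::finite) list set"
  shows "regular (LL p q {})"
  unfolding LL_empty
  by (intro regular_Un regular_UN) (auto intro: regular_empty regular_eps regular_atom)

lemma LL_conc:
  assumes "u \<in> LL p m A" "v \<in> LL m q A" "m \<in> A"
  shows "u @ v \<in> LL p q A"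
  unfolding LL_def
proof (intro CollectI conjI allI impI)
  show "dq (u @ v) p = q" using assms unfolding LL_def by simp
  fix k assume k: "0 < k \<and> k < length (u @ v)"
  show "dq (take k (u @ v)) p \<in> A"
  proof (cases "k < length u")
    case True
    then show ?thesis using assms(1) k unfolding LL_def by simp
  next
    case False
    show ?thesis
    proof (cases "k = length u")
      case True
      then show ?thesis using assms unfolding LL_def by simp
    next
      case False2: False
      with False have "length u < k" by simp
      then have "take k (u @ v) = u @ take (k - length u) v" by simp
      moreover have "dq (take (k - length u) v) m \<in> A"
        using assms(2) k \<open>length u < k\<close> unfolding LL_def by auto
      ultimately show ?thesis using assms(1) unfolding LL_def by simp
    qed
  qed
qed

lemma LL_mono: "S \<subseteq> T \<Longrightarrow> LL p q S \<subseteq> LL p q T"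
  unfolding LL_def by blast

lemma LL_Nil: "[] \<in> LL s s S"
  unfolding LL_def by simp

lemma star_LL: "w \<in> star (LL s s S) \<Longrightarrow> w \<in> LL s s (insert s S)"
proof (induction rule: star.induct)
  case star_Nil then show ?case by (rule LL_Nil)
next
  case (star_app xs ys)
  have "xs \<in> LL s s (insert s S)" using star_app(1) LL_mono[of S "insert s S"] by blast
  then show ?case using LL_conc star_app(3) by blast
qed

lemma LL_split:
  assumes "w \<in> LL p q (insert s S)"
  shows "w \<in> LL p q S \<or> (\<exists>k. 0 < k \<and> k < length w \<and> take k w \<in> LL p s S \<and> drop k w \<in> LL s q (insert s S))"
proof (cases "\<forall>k. 0 < k \<and> k < length w \<longrightarrow> dq (take k w) p \<in> S")
  case True
  then show ?thesis using assms unfolding LL_def by auto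
next
  case False
  define P where "P k \<longleftrightarrow> 0 < k \<and> k < length w \<and> dq (take k w) p \<notin> S" for k
  from False have ex: "\<exists>k. P k" unfolding P_def by auto
  define k where "k = (LEAST k. P k)"
  have Pk: "P k" unfolding k_def using ex by (metis LeastI)
  have min: "\<And>j. j < k \<Longrightarrow> \<not> P j" unfolding k_def using not_less_Least by blast
  have ks: "dq (take k w) p = s" using Pk assms unfolding P_def LL_def by auto
  have "take k w \<in> LL p s S"
    unfolding LL_def
  proof (intro CollectI conjI allI impI)
    show "dq (take k w) p = s" by (rule ks)
    fix j assume j: "0 < j \<and> j < length (take k w)"
    then have "j < k" "j < length w" by auto
    then have "\<not> P j" using min by blast
    with j \<open>j < k\<close> \<open>j < length w\<close> show "dq (take j (take k w)) p \<in> S"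
      unfolding P_def by (simp add: min_def)
  qed
  moreover have "drop k w \<in> LL s q (insert s S)"
    unfolding LL_def
  proof (intro CollectI conjI allI impI)
    have "dq w p = q" using assms unfolding LL_def by simp
    then show "dq (drop k w) s = q"
      using ks by (metis append_take_drop_id dq_app)
    fix j assume j: "0 < j \<and> j < length (drop k w)"
    have "take (k + j) w = take k w @ take j (drop k w)" by (rule take_add)
    then have "dq (take j (drop k w)) s = dq (take (k + j) w) p" using ks by simp
    moreover have "dq (take (k + j) w) p \<in> insert s S"
    proof -
      have "0 < k + j" "k + j < length w" using j by auto
      moreover have "\<forall>k. 0 < k \<and> k < length w \<longrightarrow> dq (take k w) p \<in> insert s S"
        using assms unfolding LL_def by blast
      ultimately show ?thesis by blast
    qed
    ultimately show "dq (take j (drop k w)) s \<in> insert s S" by simp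
  qed
  ultimately show ?thesis using Pk unfolding P_def by blast
qed

lemma LL_loop:
  "w \<in> LL s q (insert s S) \<Longrightarrow> w \<in> conc (star (LL s s S)) (LL s q S)"
proof (induction "length w" arbitrary: w rule: less_induct)
  case less
  from LL_split[OF less.prems] show ?case
  proof
    assume "w \<in> LL s q S"
    then show ?thesis unfolding conc_def using star.star_Nil by fastforce
  next
    assume "\<exists>k. 0 < k \<and> k < length w \<and> take k w \<in> LL s s S \<and> drop k w \<in> LL s q (insert s S)"
    then obtain k where k: "0 < k" "k < length w" "take k w \<in> LL s s S" "drop k w \<in> LL s q (insert s S)"
      by blast
    have "drop k w \<in> conc (star (LL s s S)) (LL s q S)"
      using less.hyps[of "drop k w"] k by simp
    then obtain a b where ab: "drop k w = a @ b" "a \<in> star (LL s s S)" "b \<in> LL s q S"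
      unfolding conc_def by blast
    have "take k w @ a \<in> star (LL s s S)" using k(3) ab(2) by (rule star.star_app)
    moreover have "w = (take k w @ a) @ b" using ab(1) by (metis append_assoc append_take_drop_id)
    ultimately show ?thesis using ab(3) unfolding conc_def by blast
  qed
qed

lemma LL_insert:
  "LL p q (insert s S) = LL p q S \<union> conc (LL p s S) (conc (star (LL s s S)) (LL s q S))"
proof (rule set_eqI, rule iffI)
  fix w assume w: "w \<in> LL p q (insert s S)"
  from LL_split[OF w] show "w \<in> LL p q S \<union> conc (LL p s S) (conc (star (LL s s S)) (LL s q S))"
  proof
    assume "\<exists>k. 0 < k \<and> k < length w \<and> take k w \<in> LL p s S \<and> drop k w \<in> LL s q (insert s S)"
    then obtain k where k: "take k w \<in> LL p s S" "drop k w \<in> LL s q (insert s S)" by blast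
    have "drop k w \<in> conc (star (LL s s S)) (LL s q S)" using LL_loop k(2) by blast
    then show ?thesis using k(1) unfolding conc_def
      by (metis (mono_tags, lifting) UnI2 append_take_drop_id mem_Collect_eq)
  qed simp
next
  fix w assume "w \<in> LL p q S \<union> conc (LL p s S) (conc (star (LL s s S)) (LL s q S))"
  then show "w \<in> LL p q (insert s S)"
  proof
    assume "w \<in> LL p q S" then show ?thesis using LL_mono[of S "insert s S"] by blast
  next
    assume "w \<in> conc (LL p s S) (conc (star (LL s s S)) (LL s q S))"
    then obtain a b c where abc: "w = a @ b @ c" "a \<in> LL p s S" "b \<in> star (LL s s S)" "c \<in> LL s q S"
      unfolding conc_def by blast
    have a: "a \<in> LL p s (insert s S)" using abc(2) LL_mono[of S "insert s S"] by blast
    have c: "c \<in> LL s q (insert s S)" using abc(4) LL_mono[of S "insert s S"] by blast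
    have b: "b \<in> LL s s (insert s S)" using star_LL abc(3) by blast
    have "b @ c \<in> LL s q (insert s S)" using LL_conc[OF b c] by simp
    then show ?thesis using LL_conc[OF a] abc(1) by simp
  qed
qed

lemma regular_LL:
  fixes S :: "('a::finite) list set set"
  shows "finite S \<Longrightarrow> \<forall>p q. regular (LL p q S)"
proof (induction S rule: finite_induct)
  case empty then show ?case using regular_LL_empty by blast
next
  case (insert s S)
  then show ?case unfolding LL_insert
    by (auto intro!: regular_Un regular_conc regular_star)
qed

lemma regular_T:
  fixes A :: "('a::finite) list set"
  assumes "fq A"
  shows "regular {w. dq w A = q}"
proof -
  have "{w. dq w A = q} = LL A q (range (\<lambda>w. dq w A))"
    unfolding LL_def by auto
  then show ?thesis using regular_LL assms unfolding fq_def by metis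
qed

lemma fq_regular:
  fixes L :: "('a::finite) list set"
  assumes "fq L"
  shows "regular L"
proof -
  have "L = (\<Union>q\<in>{q \<in> range (\<lambda>w. dq w L). [] \<in> q}. {w. dq w L = q})"
    by auto
  moreover have "regular (\<Union>q\<in>{q \<in> range (\<lambda>w. dq w L). [] \<in> q}. {w. dq w L = q})"
    using assms regular_T unfolding fq_def by (intro regular_UN) auto
  ultimately show ?thesis by simp
qed

lemma fq_dq: "fq L \<Longrightarrow> fq (dq p L)"
  unfolding fq_def
  by (rule finite_subset[rotated]) (auto simp flip: dq_app)

lemma fq_Int: assumes "fq A" "fq B" shows "fq (A \<inter> B)"
proof -
  have "range (\<lambda>w. dq w (A \<inter> B)) \<subseteq> (\<lambda>(X, Y). X \<inter> Y) ` (range (\<lambda>w. dq w A) \<times> range (\<lambda>w. dq w B))"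
  proof
    fix Z assume "Z \<in> range (\<lambda>w. dq w (A \<inter> B))"
    then obtain w where "Z = dq w (A \<inter> B)" by blast
    then have "Z = (\<lambda>(X, Y). X \<inter> Y) (dq w A, dq w B)" by auto
    then show "Z \<in> (\<lambda>(X, Y). X \<inter> Y) ` (range (\<lambda>w. dq w A) \<times> range (\<lambda>w. dq w B))" by blast
  qed
  then show ?thesis using assms unfolding fq_def by (meson finite_SigmaI finite_imageI finite_subset)
qed


lemma concI: "a \<in> A \<Longrightarrow> b \<in> B \<Longrightarrow> a @ b \<in> conc A B"
  unfolding conc_def by blast

lemma concE: "w \<in> conc A B \<Longrightarrow> (\<And>a b. w = a @ b \<Longrightarrow> a \<in> A \<Longrightarrow> b \<in> B \<Longrightarrow> P) \<Longrightarrow> P"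
  unfolding conc_def by blast

lemma star_split:
  "zs \<in> star A \<Longrightarrow> zs = w @ x \<Longrightarrow> w \<noteq> [] \<Longrightarrow>
   \<exists>w1 w2 x' r. w = w1 @ w2 \<and> w1 \<in> star A \<and> w2 @ x' \<in> A \<and> x = x' @ r \<and> r \<in> star A"
proof (induction arbitrary: w x rule: star.induct)
  case star_Nil then show ?case by simp
next
  case (star_app xs ys)
  from star_app.prems(1) obtain us where
    "xs = w @ us \<and> us @ ys = x \<or> xs @ us = w \<and> ys = us @ x"
    using append_eq_append_conv2[of xs ys w x] by metis
  then show ?case
  proof
    assume h: "xs = w @ us \<and> us @ ys = x"
    show ?thesis
      by (rule exI[of _ "[]"], rule exI[of _ w], rule exI[of _ us], rule exI[of _ ys])
        (use h star_app.hyps star.star_Nil in auto)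
  next
    assume h: "xs @ us = w \<and> ys = us @ x"
    show ?thesis
    proof (cases "us = []")
      case True
      show ?thesis
        by (rule exI[of _ "[]"], rule exI[of _ xs], rule exI[of _ "[]"], rule exI[of _ x])
          (use h True star_app.hyps star.star_Nil in auto)
    next
      case False
      from star_app.IH[OF _ False] h obtain w1 w2 x' r where
        o: "us = w1 @ w2" "w1 \<in> star A" "w2 @ x' \<in> A" "x = x' @ r" "r \<in> star A"
        by blast
      have "xs @ w1 \<in> star A" using star_app.hyps(1) o(2) by (rule star.star_app)
      then show ?thesis
        by (rule_tac exI[of _ "xs @ w1"], rule_tac exI[of _ w2], rule_tac exI[of _ x'], rule_tac exI[of _ r])
          (use h o in auto)
    qed
  qed
qed

lemma dq_star:
  "dq w (star A) = (if w = [] then star A else {}) \<union>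
     \<Union>((\<lambda>X. conc X (star A)) ` {dq w2 A | w2. \<exists>w1. w = w1 @ w2 \<and> w1 \<in> star A})"
proof (rule set_eqI, rule iffI)
  fix x assume x: "x \<in> dq w (star A)"
  show "x \<in> (if w = [] then star A else {}) \<union>
     \<Union>((\<lambda>X. conc X (star A)) ` {dq w2 A | w2. \<exists>w1. w = w1 @ w2 \<and> w1 \<in> star A})"
  proof (cases "w = []")
    case True then show ?thesis using x by simp
  next
    case False
    from star_split[of "w @ x" A w x] x False obtain w1 w2 x' r where
      o: "w = w1 @ w2" "w1 \<in> star A" "w2 @ x' \<in> A" "x = x' @ r" "r \<in> star A" by auto
    have "x \<in> conc (dq w2 A) (star A)" using o unfolding conc_def by auto
    then show ?thesis using o by blast
  qed
next
  fix x assume x: "x \<in> (if w = [] then star A else {}) \<union>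
     \<Union>((\<lambda>X. conc X (star A)) ` {dq w2 A | w2. \<exists>w1. w = w1 @ w2 \<and> w1 \<in> star A})"
  then show "x \<in> dq w (star A)"
  proof
    assume "x \<in> (if w = [] then star A else {})" then show ?thesis by (simp split: if_splits)
  next
    assume "x \<in> \<Union>((\<lambda>X. conc X (star A)) ` {dq w2 A | w2. \<exists>w1. w = w1 @ w2 \<and> w1 \<in> star A})"
    then obtain w1 w2 x' r where o: "w = w1 @ w2" "w1 \<in> star A" "w2 @ x' \<in> A" "x = x' @ r" "r \<in> star A"
      unfolding conc_def by auto
    have "(w2 @ x') @ r \<in> star A" using o(3,5) by (rule star.star_app)
    then have "w1 @ ((w2 @ x') @ r) \<in> star A" using o(2) star_append by blast
    then show ?thesis using o by simp
  qed
qed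

lemma dq_conc:
  "dq w (conc A B) = conc (dq w A) B \<union> \<Union>{dq w2 B | w2. \<exists>w1. w = w1 @ w2 \<and> w1 \<in> A}"
proof (rule set_eqI, rule iffI)
  fix x assume "x \<in> dq w (conc A B)"
  then obtain a b where ab: "w @ x = a @ b" "a \<in> A" "b \<in> B" unfolding conc_def by auto
  then obtain us where "w = a @ us \<and> us @ x = b \<or> w @ us = a \<and> x = us @ b"
    using append_eq_append_conv2[of w x a b] by metis
  then show "x \<in> conc (dq w A) B \<union> \<Union>{dq w2 B | w2. \<exists>w1. w = w1 @ w2 \<and> w1 \<in> A}"
  proof
    assume h: "w = a @ us \<and> us @ x = b"
    then have "x \<in> dq us B" using ab by simp
    then show ?thesis using h ab by blast
  next
    assume h: "w @ us = a \<and> x = us @ b"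
    then have "x \<in> conc (dq w A) B" using ab unfolding conc_def by auto
    then show ?thesis by blast
  qed
next
  fix x assume "x \<in> conc (dq w A) B \<union> \<Union>{dq w2 B | w2. \<exists>w1. w = w1 @ w2 \<and> w1 \<in> A}"
  then show "x \<in> dq w (conc A B)"
  proof
    assume "x \<in> conc (dq w A) B"
    then obtain a b where "x = a @ b" "w @ a \<in> A" "b \<in> B" unfolding conc_def by auto
    then have "w @ x = (w @ a) @ b" by simp
    then show ?thesis unfolding conc_def mem_dq using \<open>w @ a \<in> A\<close> \<open>b \<in> B\<close> by blast
  next
    assume "x \<in> \<Union>{dq w2 B | w2. \<exists>w1. w = w1 @ w2 \<and> w1 \<in> A}"
    then obtain w1 w2 where "w = w1 @ w2" "w1 \<in> A" "w2 @ x \<in> B" by auto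
    then show ?thesis using concI[of w1 A "w2 @ x" B] by simp
  qed
qed

lemma fq_lang: "fq (lang r)"
proof (induction r)
  case Zero
  have "range (\<lambda>w. dq w (lang Zero)) \<subseteq> {{}}" by auto
  then show ?case unfolding fq_def using finite_subset by blast
next
  case One
  have "range (\<lambda>w. dq w (lang One)) \<subseteq> {{[]}, {}}" by (auto simp: dq_def)
  then show ?case unfolding fq_def using finite_subset by blast
next
  case (Atom a)
  have "dq w {[a]} \<in> {{[a]}, {[]}, {}}" for w
    by (cases w; cases "tl w") (auto simp: dq_def)
  then have "range (\<lambda>w. dq w (lang (Atom a))) \<subseteq> {{[a]}, {[]}, {}}" by auto
  then show ?case unfolding fq_def using finite_subset by blast
next
  case (Plus r s)
  have "range (\<lambda>w. dq w (lang (Plus r s))) \<subseteq>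
    (\<lambda>(X, Y). X \<union> Y) ` (range (\<lambda>w. dq w (lang r)) \<times> range (\<lambda>w. dq w (lang s)))"
  proof
    fix Z assume "Z \<in> range (\<lambda>w. dq w (lang (Plus r s)))"
    then obtain w where "Z = dq w (lang (Plus r s))" by blast
    then have "Z = (\<lambda>(X, Y). X \<union> Y) (dq w (lang r), dq w (lang s))" by auto
    then show "Z \<in> (\<lambda>(X, Y). X \<union> Y) ` (range (\<lambda>w. dq w (lang r)) \<times> range (\<lambda>w. dq w (lang s)))"
      by blast
  qed
  then show ?case using Plus unfolding fq_def by (meson finite_SigmaI finite_imageI finite_subset)
next
  case (Times r s)
  let ?A = "lang r" and ?B = "lang s"
  have "range (\<lambda>w. dq w (lang (Times r s))) \<subseteq>
    (\<lambda>(X, Y). conc X ?B \<union> \<Union>Y) ` (range (\<lambda>w. dq w ?A) \<times> Pow (range (\<lambda>w. dq w ?B)))"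
  proof
    fix Z assume "Z \<in> range (\<lambda>w. dq w (lang (Times r s)))"
    then obtain w where "Z = dq w (lang (Times r s))" by blast
    then have "Z = (\<lambda>(X, Y). conc X ?B \<union> \<Union>Y) (dq w ?A, {dq w2 ?B | w2. \<exists>w1. w = w1 @ w2 \<and> w1 \<in> ?A})"
      using dq_conc by simp
    moreover have "{dq w2 ?B | w2. \<exists>w1. w = w1 @ w2 \<and> w1 \<in> ?A} \<in> Pow (range (\<lambda>w. dq w ?B))" by auto
    ultimately show "Z \<in> (\<lambda>(X, Y). conc X ?B \<union> \<Union>Y) ` (range (\<lambda>w. dq w ?A) \<times> Pow (range (\<lambda>w. dq w ?B)))"
      by blast
  qed
  then show ?case using Times unfolding fq_def by (meson finite_SigmaI finite_imageI finite_subset finite_Pow_iff)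
next
  case (Star r)
  let ?A = "lang r"
  let ?f = "\<lambda>(b, Y). (if b then star ?A else {}) \<union> \<Union>((\<lambda>X. conc X (star ?A)) ` Y)"
  have "range (\<lambda>w. dq w (lang (Star r))) \<subseteq> ?f ` (UNIV \<times> Pow (range (\<lambda>w. dq w ?A)))"
  proof
    fix Z assume "Z \<in> range (\<lambda>w. dq w (lang (Star r)))"
    then obtain w where "Z = dq w (lang (Star r))" by blast
    then have "Z = ?f (w = [], {dq w2 ?A | w2. \<exists>w1. w = w1 @ w2 \<and> w1 \<in> star ?A})"
      using dq_star[of w ?A] by (simp only: lang.simps prod.case)
    moreover have "{dq w2 ?A | w2. \<exists>w1. w = w1 @ w2 \<and> w1 \<in> star ?A} \<in> Pow (range (\<lambda>w. dq w ?A))" by auto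
    ultimately show "Z \<in> ?f ` (UNIV \<times> Pow (range (\<lambda>w. dq w ?A)))" by blast
  qed
  moreover have "finite (UNIV :: bool set)" by simp
  ultimately show ?case using Star unfolding fq_def by (meson finite_SigmaI finite_imageI finite_subset finite_Pow_iff)
qed

lemma regular_fq: "regular L \<Longrightarrow> fq L"
  unfolding regular_def using fq_lang by blast

lemma fq_NE: "fq {w. w \<noteq> []}"
proof -
  have "range (\<lambda>w. dq w {w. w \<noteq> []}) \<subseteq> {{w. w \<noteq> []}, UNIV}"
    by (auto simp: dq_def)
  then show ?thesis unfolding fq_def using finite_subset by blast
qed

theorem lemma4p1:
  fixes L1 L2 :: "('a::finite) list set"
  assumes "regular L1" and "regular L2"
  shows "regular (ogi_lang L1 L2)"
proof -
  have f1: "fq L1" and f2: "fq L2" using assms regular_fq by auto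
  let ?Q1 = "range (\<lambda>w. dq w L1)" and ?Q2 = "range (\<lambda>w. dq w L2)"
  let ?NE = "{w::'a list. w \<noteq> []}"
  let ?T = "\<lambda>A B. {w. dq w A = B}"
  let ?F = "\<lambda>(q1, q2, q3, r1, r2). conc (?T L1 q1) (conc (?T q1 q2 \<inter> ?T L2 r1 \<inter> ?NE)
             (conc (?T r1 r2) (conc (?T q2 q3 \<inter> r2 \<inter> ?NE) q3)))"
  let ?I = "?Q1 \<times> ?Q1 \<times> ?Q1 \<times> ?Q2 \<times> ?Q2"
  have fqQ1: "q \<in> ?Q1 \<Longrightarrow> fq q" for q using fq_dq[OF f1] by auto
  have fqQ2: "q \<in> ?Q2 \<Longrightarrow> fq q" for q using fq_dq[OF f2] by auto
  have regT: "fq A \<Longrightarrow> fq (?T A B)" for A B :: "'a list set"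
    by (rule regular_fq, rule regular_T)
  have eq: "ogi_lang L1 L2 = (\<Union>i\<in>?I. ?F i)"
  proof (rule set_eqI, rule iffI)
    fix w assume "w \<in> ogi_lang L1 L2"
    then obtain x1 u z v x2 where o: "w = x1 @ u @ z @ v @ x2" "x1 @ u @ v @ x2 \<in> L1"
      "u @ z @ v \<in> L2" "u \<noteq> []" "v \<noteq> []"
      unfolding ogi_lang_def ogi_def by blast
    define q1 where "q1 = dq x1 L1"
    define q2 where "q2 = dq u q1"
    define q3 where "q3 = dq v q2"
    define r1 where "r1 = dq u L2"
    define r2 where "r2 = dq z r1"
    have q2': "q2 = dq (x1 @ u) L1" and q3': "q3 = dq (x1 @ u @ v) L1"
      unfolding q1_def q2_def q3_def by simp_all
    have r2': "r2 = dq (u @ z) L2" unfolding r1_def r2_def by simp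
    have I: "(q1, q2, q3, r1, r2) \<in> ?I" unfolding q1_def q2' q3' r1_def r2' by blast
    have x2: "x2 \<in> q3" using o(2) unfolding q3' by simp
    have vr: "v \<in> r2" using o(3) unfolding r2' by simp
    have m1: "x1 \<in> ?T L1 q1" by (simp add: q1_def)
    have m2: "u \<in> ?T q1 q2 \<inter> ?T L2 r1 \<inter> ?NE" using o(4) by (simp add: q2_def r1_def)
    have m3: "z \<in> ?T r1 r2" by (simp add: r2_def)
    have m4: "v \<in> ?T q2 q3 \<inter> r2 \<inter> ?NE" using o(5) vr by (simp add: q3_def)
    have "w \<in> ?F (q1, q2, q3, r1, r2)"
      unfolding split o(1) by (intro concI m1 m2 m3 m4 x2)
    then show "w \<in> (\<Union>i\<in>?I. ?F i)" by (rule UN_I[OF I])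
  next
    fix w assume "w \<in> (\<Union>i\<in>?I. ?F i)"
    then obtain i where i: "w \<in> ?F i" by (rule UN_E)
    obtain q1 q2 q3 r1 r2 where "i = (q1, q2, q3, r1, r2)" by (rule prod_cases5)
    with i have "w \<in> ?F (q1, q2, q3, r1, r2)" by simp
    then obtain x1 u z v x2 where o: "w = x1 @ u @ z @ v @ x2" "dq x1 L1 = q1" "dq u q1 = q2"
      "dq u L2 = r1" "u \<noteq> []" "dq z r1 = r2" "dq v q2 = q3" "v \<in> r2" "v \<noteq> []" "x2 \<in> q3"
      unfolding split by (elim concE IntE CollectE) blast
    have "x1 @ u @ v @ x2 \<in> L1"
    proof -
      have "x2 \<in> dq (x1 @ u @ v) L1" using o by simp
      then show ?thesis by simp
    qed
    moreover have "u @ z @ v \<in> L2"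
    proof -
      have "v \<in> dq (u @ z) L2" using o by simp
      then show ?thesis by simp
    qed
    moreover have "w \<in> ogi (x1 @ u @ v @ x2) (u @ z @ v)"
      unfolding ogi_def using o(1,5,9) by blast
    ultimately show "w \<in> ogi_lang L1 L2"
      unfolding ogi_lang_def by blast
  qed
  have "regular (\<Union>i\<in>?I. ?F i)"
  proof (rule regular_UN)
    show "finite ?I" using f1 f2 unfolding fq_def by blast
    show "\<forall>i\<in>?I. regular (?F i)"
    proof
      fix i assume "i \<in> ?I"
      then obtain q1 q2 q3 r1 r2 where i: "i = (q1, q2, q3, r1, r2)" "q1 \<in> ?Q1" "q2 \<in> ?Q1"
        "q3 \<in> ?Q1" "r1 \<in> ?Q2" "r2 \<in> ?Q2" by blast
      have fs: "fq q1" "fq q2" "fq q3" "fq r1" "fq r2" using i fqQ1 fqQ2 by auto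
      show "regular (?F i)" unfolding i(1) split
        by (intro regular_conc fq_regular fq_Int regT fs f1 f2 fq_NE)
    qed
  qed
  then show ?thesis using eq by simp
qed

end
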